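(* Let $\varphi$ be a timelike ruled surface of type $M^1_+$ in $\mathbb{R}^3_1$ and let the ruled surface $\varphi^*$ of type $M^2_+$ be a Mannheim offset of $\varphi$. Let $\varphi_{h^*}$ and $\varphi_{a^*}$ be the trajectory ruled surfaces generated by the vectors $\vec h^*$ and $\vec a^*$ of $\varphi^*$. Then (a) $\varphi_{h^*}$ is a Bertrand offset of $\varphi$; (b) $\varphi_{a^*}$ is a Mannheim offset of $\varphi$.
   Context: Work in Minkowski 3-space $\mathbb{R}^3_1$ with $\langle x,y\rangle=-x_1y_1+x_2y_2+x_3y_3$, $\|x\|=\sqrt{|\langle x,x\rangle|}$, and Lorentzian cross product $x\times y=(x_2y_3-x_3y_2,\,x_1y_3-x_3y_1,\,x_2y_1-x_1y_2)$. A ruled surface is $\varphi(s,v)=\vec c(s)+v\vec q(s)$ with $\vec q$ a unit non-null vector field, $d\vec q/ds$ non-null, and $\vec c$ the striction curve ($\langle d\vec q/ds,d\vec c/ds\rangle=0$). Its Frenet frame $\{\vec q,\vec h,\vec a\}$ has central normal $\vec h=\frac{d\vec q/ds}{\|d\vec q/ds\|}$ and asymptotic normal $\vec a=\frac{(d\vec q/ds)\times\vec q}{\|d\vec q/ds\|}$. Type $M^1_+$: $\vec q$ and $\vec h$ spacelike (a timelike surface); type $M^2_+$: $\vec h$ timelike, $\vec q$ and $d\vec q/ds$ spacelike (a spacelike surface). A ruled surface $\varphi^*(s,v)=\vec c^*(s)+v\vec q^*(s)$ with Frenet frame $\{\vec q^*,\vec h^*,\vec a^*\}$ is a Mannheim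 offset of a ruled surface $\varphi$ if there is a one-to-one correspondence between their rulings such that the asymptotic normal of $\varphi$ is (up to sign) the central normal of $\varphi^*$, i.e. $\vec h^*=\vec a$; it is a Bertrand offset of $\varphi$ if there is a one-to-one correspondence between their rulings such that their central normals coincide (up to sign). Here $\vec c^*=\vec c+R\vec a$ and, with $\theta$ the angle between $\vec q$ and $\vec q^*$, $\vec q^*=\cos\theta\,\vec q+\sin\theta\,\vec h$, $\vec a^*=\sin\theta\,\vec q-\cos\theta\,\vec h$. The trajectory ruled surfaces are $\varphi_{h^*}(s,v)=\vec c^*(s)+v\vec h^*(s)$ and $\varphi_{a^*}(s,v)=\vec c^*(s)+v\vec a^*(s)$. *)

theory Defs
  imports "HOL-Analysis.Analysis"
begin

definition linner :: "real^3 \<Rightarrow> real^3 \<Rightarrow> real" where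
  "linner x y = - x$1 * y$1 + x$2 * y$2 + x$3 * y$3"

definition lnorm :: "real^3 \<Rightarrow> real" where
  "lnorm x = sqrt \<bar>linner x x\<bar>"

definition lcross :: "real^3 \<Rightarrow> real^3 \<Rightarrow> real^3" where
  "lcross x y = vector [x$2 * y$3 - x$3 * y$2, x$1 * y$3 - x$3 * y$1, x$2 * y$1 - x$1 * y$2]"

definition spacelike :: "real^3 \<Rightarrow> bool" where
  "spacelike x \<longleftrightarrow> linner x x > 0"

definition timelike :: "real^3 \<Rightarrow> bool" where
  "timelike x \<longleftrightarrow> linner x x < 0"

definition non_null :: "real^3 \<Rightarrow> bool" where
  "non_null x \<longleftrightarrow> linner x x \<noteq> 0"

definition D :: "(real \<Rightarrow> real^3) \<Rightarrow> real \<Rightarrow> real^3" where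
  "D f s = vector_derivative f (at s)"

text \<open>Central normal h = q'/||q'|| and asymptotic normal a = (q' x q)/||q'||
  of the ruled surface with ruling field q.\<close>
definition central_normal :: "(real \<Rightarrow> real^3) \<Rightarrow> real \<Rightarrow> real^3" where
  "central_normal q s = (1 / lnorm (D q s)) *\<^sub>R D q s"

definition asymptotic_normal :: "(real \<Rightarrow> real^3) \<Rightarrow> real \<Rightarrow> real^3" where
  "asymptotic_normal q s = (1 / lnorm (D q s)) *\<^sub>R lcross (D q s) (q s)"

text \<open>phi(s,v) = c(s) + v q(s), s in the open parameter set I, is a ruled surface:
  q unit non-null, q' non-null, c the striction curve (<q',c'> = 0);
  q is C^2-type differentiable (twice differentiable), c differentiable.\<close>
definition ruled_surface :: "real set \<Rightarrow> (real \<Rightarrow> real^3) \<Rightarrow> (real \<Rightarrow> real^3) \<Rightarrow> bool" where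
  "ruled_surface I c q \<longleftrightarrow> open I \<and>
     (\<forall>s\<in>I. q differentiable (at s) \<and> (D q) differentiable (at s) \<and> c differentiable (at s) \<and>
        \<bar>linner (q s) (q s)\<bar> = 1 \<and> non_null (D q s) \<and> linner (D q s) (D c s) = 0)"

definition type_M1_plus :: "real set \<Rightarrow> (real \<Rightarrow> real^3) \<Rightarrow> (real \<Rightarrow> real^3) \<Rightarrow> bool" where
  "type_M1_plus I c q \<longleftrightarrow> ruled_surface I c q \<and>
     (\<forall>s\<in>I. spacelike (q s) \<and> spacelike (central_normal q s))"

definition type_M2_plus :: "real set \<Rightarrow> (real \<Rightarrow> real^3) \<Rightarrow> (real \<Rightarrow> real^3) \<Rightarrow> bool" where
  "type_M2_plus I c q \<longleftrightarrow> ruled_surface I c q \<and>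
     (\<forall>s\<in>I. spacelike (q s) \<and> timelike (central_normal q s))"

text \<open>Offsets, with the correspondence of rulings s <-> s.\<close>
definition mannheim_offset :: "real set \<Rightarrow> (real \<Rightarrow> real^3) \<Rightarrow> (real \<Rightarrow> real^3) \<Rightarrow> bool" where
  "mannheim_offset I q1 q2 \<longleftrightarrow>
     (\<forall>s\<in>I. central_normal q2 s = asymptotic_normal q1 s \<or> central_normal q2 s = - asymptotic_normal q1 s)"

definition bertrand_offset :: "real set \<Rightarrow> (real \<Rightarrow> real^3) \<Rightarrow> (real \<Rightarrow> real^3) \<Rightarrow> bool" where
  "bertrand_offset I q1 q2 \<longleftrightarrow>
     (\<forall>s\<in>I. central_normal q2 s = central_normal q1 s \<or> central_normal q2 s = - central_normal q1 s)"

text \<open>A trajectory ruled surface c*(s) + v r(s) is a genuine ruled surface direction-wise: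
  r differentiable with non-null derivative (r is automatically unit non-null here).\<close>
definition trajectory_ruled :: "real set \<Rightarrow> (real \<Rightarrow> real^3) \<Rightarrow> bool" where
  "trajectory_ruled I r \<longleftrightarrow> (\<forall>s\<in>I. r differentiable (at s) \<and> non_null (D r s))"

end

theory Submission
  imports Defs
begin

lemma comp_deriv:
  assumes "f differentiable (at s)"
  shows "((\<lambda>t. f t $ i) has_real_derivative (D f s $ i)) (at s)"
proof -
  have "(f has_vector_derivative D f s) (at s)"
    using assms by (simp add: D_def vector_derivative_works)
  from bounded_linear.has_vector_derivative[OF bounded_linear_vec_nth this, of i]
  show ?thesis by (simp add: has_real_derivative_iff_has_vector_derivative)
qed

lemma linner_deriv:
  assumes "f differentiable (at s)" "g differentiable (at s)"
  shows "((\<lambda>t. linner (f t) (g t)) has_real_derivative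
     (linner (D f s) (g s) + linner (f s) (D g s))) (at s)"
proof -
  have m: "((\<lambda>t. f t$i * g t$i) has_real_derivative (D f s$i * g s$i + f s$i * D g s$i)) (at s)" for i
    using DERIV_mult[OF comp_deriv[OF assms(1)] comp_deriv[OF assms(2)], of i i] by (simp add: algebra_simps)
  have "((\<lambda>t. - (f t$1 * g t$1) + f t$2 * g t$2 + f t$3 * g t$3) has_real_derivative
     (- (D f s$1 * g s$1 + f s$1 * D g s$1) + (D f s$2 * g s$2 + f s$2 * D g s$2)
      + (D f s$3 * g s$3 + f s$3 * D g s$3))) (at s)"
    by (intro DERIV_add m DERIV_minus)
  then show ?thesis unfolding linner_def by (simp add: algebra_simps)
qed

lemma linner_const_deriv:
  assumes "f differentiable (at s)" "g differentiable (at s)" "open I" "s \<in> I"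
    "\<And>t. t \<in> I \<Longrightarrow> linner (f t) (g t) = k"
  shows "linner (D f s) (g s) + linner (f s) (D g s) = 0"
proof -
  have "((\<lambda>t. linner (f t) (g t)) has_real_derivative 0) (at s)"
    by (rule has_field_derivative_transform_within_open[of "\<lambda>_. k" 0 s I])
       (use assms in auto)
  with linner_deriv[OF assms(1,2)] show ?thesis using DERIV_unique by blast
qed

lemma cross_orth1: "linner (lcross x y) y = 0"
  by (simp add: linner_def lcross_def algebra_simps)
lemma cross_orth2: "linner (lcross x y) x = 0"
  by (simp add: linner_def lcross_def algebra_simps)
lemma cross_lag: "linner (lcross x y) (lcross x y) = - (linner x x * linner y y - (linner x y)^2)"
  by (simp add: linner_def lcross_def power2_eq_square algebra_simps)

lemma linner_sym: "linner x y = linner y x" by (simp add: linner_def mult.commute)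
lemma linner_scale1: "linner (a *\<^sub>R x) y = a * linner x y" by (simp add: linner_def algebra_simps)
lemma linner_scale2: "linner x (a *\<^sub>R y) = a * linner x y" by (simp add: linner_def algebra_simps)
lemma linner_neg1: "linner (- x) y = - linner x y" by (simp add: linner_def)
lemma linner_neg2: "linner x (- y) = - linner x y" by (simp add: linner_def)

lemma par_real:
  fixes x1 x2 x3 a1 a2 a3 b1 b2 b3 :: real
  assumes "x1*a1+x2*a2+x3*a3 = 0" "x1*b1+x2*b2+x3*b3 = 0"
  defines "c1 \<equiv> a2*b3-a3*b2" and "c2 \<equiv> a3*b1-a1*b3" and "c3 \<equiv> a1*b2-a2*b1"
  shows "(c1*c1+c2*c2+c3*c3)*x1 = (x1*c1+x2*c2+x3*c3)*c1 \<and>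
         (c1*c1+c2*c2+c3*c3)*x2 = (x1*c1+x2*c2+x3*c3)*c2 \<and>
         (c1*c1+c2*c2+c3*c3)*x3 = (x1*c1+x2*c2+x3*c3)*c3"
  using assms unfolding c1_def c2_def c3_def by algebra


lemma parallel:
  assumes "linner x u = 0" "linner x w = 0" "linner h u = 0" "linner h w = 0"
    "linner (lcross u w) (lcross u w) \<noteq> 0" "h \<noteq> 0"
  shows "\<exists>m. x = m *\<^sub>R h"
proof -
  define c1 where "c1 = u$2*w$3-u$3*w$2"
  define c2 where "c2 = u$1*w$3-u$3*w$1"
  define c3 where "c3 = u$2*w$1-u$1*w$2"
  have lc: "lcross u w = vector [c1,c2,c3]" unfolding lcross_def c1_def c2_def c3_def
    by (simp add: algebra_simps)
  have cne: "c1 \<noteq> 0 \<or> c2 \<noteq> 0 \<or> c3 \<noteq> 0" using assms(5) unfolding lc linner_def by auto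
  define cc where "cc = c1*c1+c2*c2+c3*c3"
  have ccpos: "cc > 0"
  proof -
    have "c1*c1 \<ge> 0" "c2*c2 \<ge> 0" "c3*c3 \<ge> 0" by simp_all
    moreover have "c1*c1 > 0 \<or> c2*c2 > 0 \<or> c3*c3 > 0" using cne by (auto simp: zero_less_mult_iff linorder_neq_iff)
    ultimately show ?thesis unfolding cc_def by linarith
  qed
  have px: "cc*x$1 = (x$1*c1+x$2*c2+x$3*c3)*c1 \<and> cc*x$2 = (x$1*c1+x$2*c2+x$3*c3)*c2 \<and> cc*x$3 = (x$1*c1+x$2*c2+x$3*c3)*c3"
    using par_real[of "x$1" "-u$1" "x$2" "u$2" "x$3" "u$3" "-w$1" "w$2" "w$3"] assms(1,2)
    unfolding cc_def c1_def c2_def c3_def linner_def by (simp add: algebra_simps)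
  have ph: "cc*h$1 = (h$1*c1+h$2*c2+h$3*c3)*c1 \<and> cc*h$2 = (h$1*c1+h$2*c2+h$3*c3)*c2 \<and> cc*h$3 = (h$1*c1+h$2*c2+h$3*c3)*c3"
    using par_real[of "h$1" "-u$1" "h$2" "u$2" "h$3" "u$3" "-w$1" "w$2" "w$3"] assms(3,4)
    unfolding cc_def c1_def c2_def c3_def linner_def by (simp add: algebra_simps)
  define hc where "hc = h$1*c1+h$2*c2+h$3*c3"
  define xc where "xc = x$1*c1+x$2*c2+x$3*c3"
  have hcne: "hc \<noteq> 0"
  proof
    assume "hc = 0"
    then have "h$1 = 0" "h$2 = 0" "h$3 = 0" using ph ccpos unfolding hc_def by auto
    then have "h = 0" by (simp add: vec_eq_iff forall_3)
    with assms(6) show False by simp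
  qed
  have "x = (xc/hc) *\<^sub>R h"
  proof -
    have "x$i = (xc/hc) * h$i" if "i \<in> {1,2,3::3}" for i
    proof -
      have "cc * x$i = xc * ((cc * h$i)/hc)" using px ph that hcne unfolding xc_def hc_def by auto
      then show ?thesis using ccpos hcne by (simp add: field_simps)
    qed
    then show ?thesis by (simp add: vec_eq_iff forall_3)
  qed
  then show ?thesis by blast
qed


lemma frame:
  assumes rs: "ruled_surface I c q" and sp: "\<forall>t\<in>I. spacelike (q t)" and s: "s \<in> I"
  defines "Q \<equiv> linner (D q s) (D q s)"
  shows "linner (q s) (q s) = 1" "linner (D q s) (q s) = 0" "Q \<noteq> 0"
    "linner (central_normal q s) (central_normal q s) = Q / \<bar>Q\<bar>"
    "linner (central_normal q s) (q s) = 0"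
    "linner (asymptotic_normal q s) (q s) = 0"
    "linner (asymptotic_normal q s) (D q s) = 0"
    "linner (asymptotic_normal q s) (central_normal q s) = 0"
    "linner (asymptotic_normal q s) (asymptotic_normal q s) = - Q / \<bar>Q\<bar>"
proof -
  have one: "\<And>t. t \<in> I \<Longrightarrow> linner (q t) (q t) = 1"
    using rs sp unfolding ruled_surface_def spacelike_def by fastforce
  show q1: "linner (q s) (q s) = 1" using one s .
  have "linner (D q s) (q s) + linner (q s) (D q s) = 0"
    by (rule linner_const_deriv[of q s q I 1]) (use rs s one in \<open>auto simp: ruled_surface_def\<close>)
  then show dq: "linner (D q s) (q s) = 0" by (simp add: linner_sym)
  show Qne: "Q \<noteq> 0" using rs s unfolding ruled_surface_def non_null_def Q_def by auto
  define n where "n = lnorm (D q s)"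
  have n2: "n*n = \<bar>Q\<bar>" unfolding n_def lnorm_def Q_def by simp
  have npos: "n > 0" unfolding n_def lnorm_def using Qne Q_def by simp
  show "linner (central_normal q s) (central_normal q s) = Q / \<bar>Q\<bar>"
    unfolding central_normal_def n_def[symmetric] linner_scale1 linner_scale2 Q_def[symmetric]
    using n2 npos by (simp add: field_simps)
  show "linner (central_normal q s) (q s) = 0"
    unfolding central_normal_def linner_scale1 using dq by simp
  show "linner (asymptotic_normal q s) (q s) = 0"
    unfolding asymptotic_normal_def linner_scale1 by (simp add: cross_orth1)
  show "linner (asymptotic_normal q s) (D q s) = 0"
    unfolding asymptotic_normal_def linner_scale1 by (simp add: cross_orth2)
  show "linner (asymptotic_normal q s) (central_normal q s) = 0"
    unfolding asymptotic_normal_def central_normal_def linner_scale1 linner_scale2 by (simp add: cross_orth2)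
  show "linner (asymptotic_normal q s) (asymptotic_normal q s) = - Q / \<bar>Q\<bar>"
    unfolding asymptotic_normal_def n_def[symmetric] linner_scale1 linner_scale2 cross_lag
    using n2 npos q1 dq by (simp add: field_simps Q_def linner_sym)
qed

lemma cn_pm:
  assumes "non_null x" "x = m *\<^sub>R h" "\<bar>linner h h\<bar> = 1"
  shows "(1 / lnorm x) *\<^sub>R x = h \<or> (1 / lnorm x) *\<^sub>R x = - h"
proof -
  have "linner x x = m*m*linner h h" by (simp add: assms(2) linner_scale1 linner_scale2)
  hence "\<bar>linner x x\<bar> = m^2" using assms(3) by (simp add: abs_mult power2_eq_square)
  hence "lnorm x = \<bar>m\<bar>" by (simp add: lnorm_def)
  moreover have "m \<noteq> 0" using assms(1,2) unfolding non_null_def by (auto simp: linner_scale1)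
  ultimately show ?thesis using assms(2) by (cases "m > 0") auto
qed

lemma linner_zero_vec: "linner h h \<noteq> 0 \<Longrightarrow> h \<noteq> 0" by (auto simp: linner_def)


theorem corollary6p3:
  fixes I :: "real set" and c q cs qs :: "real \<Rightarrow> real^3" and R :: "real \<Rightarrow> real"
  assumes phi: "type_M1_plus I c q"
    and phis: "type_M2_plus I cs qs"
    and mann: "mannheim_offset I q qs"
    and base: "\<forall>s\<in>I. cs s = c s + R s *\<^sub>R asymptotic_normal q s"
    and traj_h: "trajectory_ruled I (central_normal qs)"
    and traj_a: "trajectory_ruled I (asymptotic_normal qs)"
  shows "bertrand_offset I q (central_normal qs) \<and> mannheim_offset I q (asymptotic_normal qs)"
proof -
  have rs: "ruled_surface I c q" and spq: "\<forall>t\<in>I. spacelike (q t)"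
    using phi unfolding type_M1_plus_def by auto
  have rss: "ruled_surface I cs qs" and spqs: "\<forall>t\<in>I. spacelike (qs t)"
    and tl: "\<forall>t\<in>I. timelike (central_normal qs t)"
    using phis unfolding type_M2_plus_def by auto
  have opI: "open I" using rs unfolding ruled_surface_def by simp
  note F = frame[OF rs spq] and Fs = frame[OF rss spqs]
  define hs where "hs = central_normal qs"
  define as where "as = asymptotic_normal qs"
  have hspm: "hs t = asymptotic_normal q t \<or> hs t = - asymptotic_normal q t" if "t \<in> I" for t
    using mann that unfolding mannheim_offset_def hs_def by auto
  have Qneg: "linner (D qs t) (D qs t) < 0" if "t \<in> I" for t
  proof -
    have "linner (hs t) (hs t) < 0" using tl that unfolding timelike_def hs_def by auto
    then show ?thesis using Fs(4)[OF that] unfolding hs_def by (auto simp: divide_less_0_iff)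
  qed
  have hshs: "linner (hs t) (hs t) = -1" if "t \<in> I" for t
    using Fs(4)[OF that] Qneg[OF that] unfolding hs_def by simp
  have asas: "linner (as t) (as t) = 1" if "t \<in> I" for t
    using Fs(9)[OF that] Qneg[OF that] unfolding as_def by simp
  have hsq: "linner (hs t) (q t) = 0" if "t \<in> I" for t
    using hspm[OF that] F(6)[OF that] by (auto simp: linner_neg1)
  have asqs: "linner (as t) (qs t) = 0" if "t \<in> I" for t
    using Fs(6)[OF that] unfolding as_def .
  have "bertrand_offset I q hs"
    unfolding bertrand_offset_def
  proof
    fix s assume s: "s \<in> I"
    have dhs: "hs differentiable (at s)" and nn: "non_null (D hs s)"
      using traj_h s unfolding trajectory_ruled_def hs_def by auto
    have dq: "q differentiable (at s)" using rs s unfolding ruled_surface_def by auto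
    have "linner (D hs s) (q s) + linner (hs s) (D q s) = 0"
      by (rule linner_const_deriv[OF dhs dq opI s, of 0]) (use hsq in auto)
    moreover have "linner (hs s) (D q s) = 0"
      using hspm[OF s] F(7)[OF s] by (auto simp: linner_neg1)
    ultimately have o1: "linner (D hs s) (q s) = 0" by simp
    have "linner (D hs s) (hs s) + linner (hs s) (D hs s) = 0"
      by (rule linner_const_deriv[OF dhs dhs opI s, of "-1"]) (use hshs in auto)
    then have o2: "linner (D hs s) (hs s) = 0" by (simp add: linner_sym)
    have o3: "linner (central_normal q s) (q s) = 0" using F(5)[OF s] .
    have o4: "linner (central_normal q s) (hs s) = 0"
      using hspm[OF s] F(8)[OF s] by (auto simp: linner_neg2 linner_sym)
    have cc: "linner (lcross (q s) (hs s)) (lcross (q s) (hs s)) \<noteq> 0"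
      unfolding cross_lag using F(1)[OF s] hshs[OF s] hsq[OF s] by (simp add: linner_sym)
    have habs: "\<bar>linner (central_normal q s) (central_normal q s)\<bar> = 1"
      using F(4)[OF s] F(3)[OF s] by simp
    have hne: "central_normal q s \<noteq> 0" using habs linner_zero_vec by force
    obtain m where "D hs s = m *\<^sub>R central_normal q s"
      using parallel[OF o1 o2 o3 o4 cc hne] by blast
    from cn_pm[OF nn this habs]
    show "central_normal hs s = central_normal q s \<or> central_normal hs s = - central_normal q s"
      unfolding central_normal_def[of hs] .
  qed
  moreover have "mannheim_offset I q as"
    unfolding mannheim_offset_def
  proof
    fix s assume s: "s \<in> I"
    have das: "as differentiable (at s)" and nn: "non_null (D as s)"
      using traj_a s unfolding trajectory_ruled_def as_def by auto
    have dq: "qs differentiable (at s)" using rss s unfolding ruled_surface_def by auto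
    have "linner (D as s) (qs s) + linner (as s) (D qs s) = 0"
      by (rule linner_const_deriv[OF das dq opI s, of 0]) (use asqs in auto)
    moreover have "linner (as s) (D qs s) = 0"
      using Fs(7)[OF s] unfolding as_def .
    ultimately have o1: "linner (D as s) (qs s) = 0" by simp
    have "linner (D as s) (as s) + linner (as s) (D as s) = 0"
      by (rule linner_const_deriv[OF das das opI s, of "1"]) (use asas in auto)
    then have o2: "linner (D as s) (as s) = 0" by (simp add: linner_sym)
    have o3: "linner (hs s) (qs s) = 0" using Fs(5)[OF s] unfolding hs_def .
    have o4: "linner (hs s) (as s) = 0"
      using Fs(8)[OF s] unfolding hs_def as_def by (simp add: linner_sym)
    have cc: "linner (lcross (qs s) (as s)) (lcross (qs s) (as s)) \<noteq> 0"
      unfolding cross_lag using Fs(1)[OF s] asas[OF s] asqs[OF s] by (simp add: linner_sym)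
    have habs: "\<bar>linner (hs s) (hs s)\<bar> = 1" using hshs[OF s] by simp
    have hne: "hs s \<noteq> 0" using habs linner_zero_vec by force
    obtain m where "D as s = m *\<^sub>R hs s"
      using parallel[OF o1 o2 o3 o4 cc hne] by blast
    from cn_pm[OF nn this habs]
    have "central_normal as s = hs s \<or> central_normal as s = - hs s"
      unfolding central_normal_def[of as] .
    then show "central_normal as s = asymptotic_normal q s \<or> central_normal as s = - asymptotic_normal q s"
      using hspm[OF s] by auto
  qed
  ultimately show ?thesis unfolding hs_def as_def by simp
qed

end
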